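(* The full subcategory $\mathsf{PreComp}\subseteq\mathsf{sSet}^+$ of pre-complicial sets is closed under the Gray tensor product: if $X$ and $Y$ are pre-complicial, then so is $X\otimes Y$.
   Context: A marked simplicial set is a simplicial set $X$ with a set of marked simplices of positive dimension containing all degenerate simplices; maps preserve marked simplices; category $\mathsf{sSet}^+$. Simplicial operators act on the right; $\delta_k$ denotes the $k$-th face operator. For $n\ge1$ and $0\le k\le n$, $\Delta^n_k$ is $\Delta^n$ in which a non-degenerate simplex is marked iff it contains all vertices in $\{k-1,k,k+1\}\cap[n]$. For $n\ge2$, $(\Delta^n_k)''$ is $\Delta^n_k$ with additionally all $(n-1)$-simplices marked, and $(\Delta^n_k)'$ is $\Delta^n_k$ with additionally all $(n-1)$-faces other than $\delta_k$ marked. A pre-complicial set is a marked simplicial set with the right lifting property with respect to all inclusions $(\Delta^n_k)'\to(\Delta^n_k)''$; $\mathsf{PreComp}$ is the full subcategory of these. For $0\le p\le n$ with $p+q=n$, let $\lfloor p\rfloor\colon[p]\to[n]$ be $i\mapsto i$ and $\lceil q\rceil\colon[q]\to[n]$ be $i\mapsto p+i$. For $X,Y\in\mathsf{sSet}^+$ and $(x,y)\in X_n\times Y_n$, $(x,y)$ is $i$-cloven ($0\le i\le n$) if $x\lfloor i\rfloor$ is marked in $X$ or $y\lceil n-i\rceil$ is marked in $Y$ (note $0$-simplices are never marked). The Gray tensor product $X\otimes Y$ has underlying simplicial set $X\times Y$, with $(x,y)$ marked iff it is $i$-cloven for every $0\le i\le n$. *)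

theory Defs
  imports Main
begin

text \<open>Simplicial operators \<alpha> : [m] \<rightarrow> [n] are monotone maps, represented by
  HOL functions nat \<Rightarrow> nat whose values outside {0..m} are irrelevant.
  Operators act on the right: act X n m x \<alpha> is x\<alpha>, for x an n-simplex.\<close>

definition is_op :: "nat \<Rightarrow> nat \<Rightarrow> (nat \<Rightarrow> nat) \<Rightarrow> bool" where
  "is_op m n \<alpha> \<longleftrightarrow> (\<forall>i j. i \<le> j \<and> j \<le> m \<longrightarrow> \<alpha> i \<le> \<alpha> j) \<and> (\<forall>i\<le>m. \<alpha> i \<le> n)"

record 'a msset =
  simp :: "nat \<Rightarrow> 'a set"
  act  :: "nat \<Rightarrow> nat \<Rightarrow> 'a \<Rightarrow> (nat \<Rightarrow> nat) \<Rightarrow> 'a"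
  mark :: "nat \<Rightarrow> 'a set"

definition is_sset :: "'a msset \<Rightarrow> bool" where
  "is_sset X \<longleftrightarrow>
     (\<forall>n m x \<alpha>. x \<in> simp X n \<longrightarrow> is_op m n \<alpha> \<longrightarrow> act X n m x \<alpha> \<in> simp X m) \<and>
     (\<forall>n x. x \<in> simp X n \<longrightarrow> act X n n x (\<lambda>i. i) = x) \<and>
     (\<forall>n m k x \<alpha> \<beta>. x \<in> simp X n \<longrightarrow> is_op m n \<alpha> \<longrightarrow> is_op k m \<beta> \<longrightarrow>
         act X m k (act X n m x \<alpha>) \<beta> = act X n k x (\<alpha> \<circ> \<beta>)) \<and>
     (\<forall>n m x \<alpha> \<alpha>'. x \<in> simp X n \<longrightarrow> (\<forall>i\<le>m. \<alpha> i = \<alpha>' i) \<longrightarrow>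
         act X n m x \<alpha> = act X n m x \<alpha>')"

definition degenerate :: "'a msset \<Rightarrow> nat \<Rightarrow> 'a \<Rightarrow> bool" where
  "degenerate X n x \<longleftrightarrow>
     (\<exists>m<n. \<exists>y\<in>simp X m. \<exists>\<sigma>. is_op n m \<sigma> \<and> x = act X m n y \<sigma>)"

definition is_msset :: "'a msset \<Rightarrow> bool" where
  "is_msset X \<longleftrightarrow> is_sset X \<and> (\<forall>n. mark X n \<subseteq> simp X n) \<and> mark X 0 = {} \<and>
     (\<forall>n x. x \<in> simp X n \<longrightarrow> degenerate X n x \<longrightarrow> x \<in> mark X n)"

definition smap :: "'a msset \<Rightarrow> 'b msset \<Rightarrow> (nat \<Rightarrow> 'a \<Rightarrow> 'b) \<Rightarrow> bool" where
  "smap A X f \<longleftrightarrow>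
     (\<forall>m a. a \<in> simp A m \<longrightarrow> f m a \<in> simp X m) \<and>
     (\<forall>n m a \<alpha>. a \<in> simp A n \<longrightarrow> is_op m n \<alpha> \<longrightarrow>
         f m (act A n m a \<alpha>) = act X n m (f n a) \<alpha>) \<and>
     (\<forall>m a. a \<in> mark A m \<longrightarrow> f m a \<in> mark X m)"

definition rlp :: "'a msset \<Rightarrow> 'c msset \<Rightarrow> (nat \<Rightarrow> 'a \<Rightarrow> 'c) \<Rightarrow> 'b msset \<Rightarrow> bool" where
  "rlp A B i X \<longleftrightarrow>
     (\<forall>f. smap A X f \<longrightarrow> (\<exists>g. smap B X g \<and> (\<forall>m a. a \<in> simp A m \<longrightarrow> g m (i m a) = f m a)))"

text \<open>The standard simplex \<Delta>^n: m-simplices are the operators [m] \<rightarrow> [n],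
  normalised to be 0 outside {0..m}.\<close>
definition dsimp :: "nat \<Rightarrow> nat \<Rightarrow> (nat \<Rightarrow> nat) set" where
  "dsimp n m = {\<alpha>. is_op m n \<alpha> \<and> (\<forall>j>m. \<alpha> j = 0)}"

definition dact :: "nat \<Rightarrow> nat \<Rightarrow> (nat \<Rightarrow> nat) \<Rightarrow> (nat \<Rightarrow> nat) \<Rightarrow> (nat \<Rightarrow> nat)" where
  "dact p m \<alpha> \<beta> = (\<lambda>j. if j \<le> m then \<alpha> (\<beta> j) else 0)"

definition mark_nk :: "nat \<Rightarrow> nat \<Rightarrow> nat \<Rightarrow> (nat \<Rightarrow> nat) set" where
  "mark_nk n k m = {\<alpha> \<in> dsimp n m. 0 < m \<and>
      (\<not> inj_on \<alpha> {0..m} \<or> {j. j \<le> n \<and> k \<le> j + 1 \<and> j \<le> k + 1} \<subseteq> \<alpha> ` {0..m})}"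

definition Delta_nk :: "nat \<Rightarrow> nat \<Rightarrow> (nat \<Rightarrow> nat) msset" where
  "Delta_nk n k = \<lparr>simp = dsimp n, act = (\<lambda>p m. dact p m), mark = mark_nk n k\<rparr>"

definition Delta_nk_dd :: "nat \<Rightarrow> nat \<Rightarrow> (nat \<Rightarrow> nat) msset" where
  "Delta_nk_dd n k = \<lparr>simp = dsimp n, act = (\<lambda>p m. dact p m),
     mark = (\<lambda>m. mark_nk n k m \<union> (if m = n - 1 then dsimp n m else {}))\<rparr>"

text \<open>(\<Delta>^n_k)': additionally all (n-1)-faces other than \<delta>_k marked; the face
  \<delta>_j is the injective operator [n-1] \<rightarrow> [n] whose image omits j.\<close>
definition Delta_nk_d :: "nat \<Rightarrow> nat \<Rightarrow> (nat \<Rightarrow> nat) msset" where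
  "Delta_nk_d n k = \<lparr>simp = dsimp n, act = (\<lambda>p m. dact p m),
     mark = (\<lambda>m. mark_nk n k m \<union>
        (if m = n - 1 then {\<alpha> \<in> dsimp n m. \<exists>j\<le>n. j \<noteq> k \<and> inj_on \<alpha> {0..m} \<and>
                                  \<alpha> ` {0..m} = {0..n} - {j}} else {}))\<rparr>"

definition pre_complicial :: "'a msset \<Rightarrow> bool" where
  "pre_complicial X \<longleftrightarrow> is_msset X \<and>
     (\<forall>n k. 2 \<le> n \<longrightarrow> k \<le> n \<longrightarrow> rlp (Delta_nk_d n k) (Delta_nk_dd n k) (\<lambda>m a. a) X)"

definition cloven :: "'a msset \<Rightarrow> 'b msset \<Rightarrow> nat \<Rightarrow> nat \<Rightarrow> 'a \<times> 'b \<Rightarrow> bool" where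
  "cloven X Y n i xy \<longleftrightarrow>
     act X n i (fst xy) (\<lambda>j. j) \<in> mark X i \<or> act Y n (n - i) (snd xy) (\<lambda>j. i + j) \<in> mark Y (n - i)"

definition gray :: "'a msset \<Rightarrow> 'b msset \<Rightarrow> ('a \<times> 'b) msset" where
  "gray X Y = \<lparr>simp = (\<lambda>n. simp X n \<times> simp Y n),
     act = (\<lambda>n m xy \<alpha>. (act X n m (fst xy) \<alpha>, act Y n m (snd xy) \<alpha>)),
     mark = (\<lambda>n. {xy \<in> simp X n \<times> simp Y n. \<forall>i\<le>n. cloven X Y n i xy})\<rparr>"

end

theory Submission
  imports Defs
begin


definition enum :: "nat set \<Rightarrow> nat \<Rightarrow> nat" where
  "enum T j = (if j < card T then sorted_list_of_set T ! j else 0)"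

definition mk :: "'a msset \<Rightarrow> nat \<Rightarrow> 'a \<Rightarrow> nat set \<Rightarrow> bool" where
  "mk X n x T \<longleftrightarrow> act X n (card T - 1) x (enum T) \<in> mark X (card T - 1)"

lemma ss_simp: "is_sset X \<Longrightarrow> x \<in> simp X n \<Longrightarrow> is_op m n \<alpha> \<Longrightarrow> act X n m x \<alpha> \<in> simp X m"
  unfolding is_sset_def by blast
lemma ss_id: "is_sset X \<Longrightarrow> x \<in> simp X n \<Longrightarrow> act X n n x (\<lambda>i. i) = x"
  unfolding is_sset_def by blast
lemma ss_comp: "is_sset X \<Longrightarrow> x \<in> simp X n \<Longrightarrow> is_op m n \<alpha> \<Longrightarrow> is_op k m \<beta> \<Longrightarrow>
    act X m k (act X n m x \<alpha>) \<beta> = act X n k x (\<alpha> \<circ> \<beta>)"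
  unfolding is_sset_def by blast
lemma ss_ext: "is_sset X \<Longrightarrow> x \<in> simp X n \<Longrightarrow> (\<And>i. i \<le> m \<Longrightarrow> \<alpha> i = \<alpha>' i) \<Longrightarrow>
    act X n m x \<alpha> = act X n m x \<alpha>'"
  unfolding is_sset_def by blast

lemma op_strict:
  assumes "is_op m n \<alpha>" "inj_on \<alpha> {0..m}" "i < j" "j \<le> m"
  shows "\<alpha> i < \<alpha> j"
proof -
  have "\<alpha> i \<le> \<alpha> j" using assms unfolding is_op_def by auto
  moreover have "\<alpha> i \<noteq> \<alpha> j" using assms(2-4) unfolding inj_on_def by fastforce
  ultimately show ?thesis by simp
qed

lemma sorted_map_op:
  assumes "is_op m n \<alpha>" "inj_on \<alpha> {0..m}"
  shows "sorted_list_of_set (\<alpha> ` {0..m}) = map \<alpha> [0..<Suc m]"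
proof -
  have "sorted_wrt (<) (map \<alpha> [0..<Suc m])"
    unfolding sorted_wrt_map
    by (rule sorted_wrt_mono_rel[OF _ sorted_wrt_upt]) (use op_strict[OF assms] in auto)
  moreover have "set (map \<alpha> [0..<Suc m]) = \<alpha> ` {0..m}"
    by (simp only: set_map set_upt atLeastLessThanSuc_atLeastAtMost)
  moreover have "length (map \<alpha> [0..<Suc m]) = card (\<alpha> ` {0..m})"
    using card_image[OF assms(2)] by simp
  ultimately show ?thesis
    using sorted_list_of_set_unique[of "\<alpha> ` {0..m}" "map \<alpha> [0..<Suc m]"] by blast
qed

lemma card_op_image:
  assumes "inj_on \<alpha> {0..m}" shows "card (\<alpha> ` {0..m}) = Suc m"
  using card_image[OF assms] by simp

lemma enum_op:
  assumes "is_op m n \<alpha>" "inj_on \<alpha> {0..m}" "j \<le> m"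
  shows "enum (\<alpha> ` {0..m}) j = \<alpha> j"
  unfolding enum_def using sorted_map_op[OF assms(1,2)] card_op_image[OF assms(2)] assms(3)
  by (simp del: upt_Suc add: nth_map_upt)

lemma mk_iff:
  assumes "is_sset X" "x \<in> simp X n" "is_op m n \<alpha>" "inj_on \<alpha> {0..m}"
  shows "act X n m x \<alpha> \<in> mark X m \<longleftrightarrow> mk X n x (\<alpha> ` {0..m})"
proof -
  have c: "card (\<alpha> ` {0..m}) - 1 = m" using card_op_image[OF assms(4)] by simp
  have "act X n m x \<alpha> = act X n m x (enum (\<alpha> ` {0..m}))"
    using ss_ext[OF assms(1,2)] enum_op[OF assms(3,4)] by metis
  then show ?thesis unfolding mk_def c by simp
qed

lemma adj_eq:
  assumes "is_op q p \<alpha>" "\<not> inj_on \<alpha> {0..q}"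
  shows "\<exists>j<q. \<alpha> j = \<alpha> (Suc j)"
proof -
  obtain a b where ab: "a \<le> q" "b \<le> q" "a \<noteq> b" "\<alpha> a = \<alpha> b"
    using assms(2) unfolding inj_on_def by auto
  then obtain a b where ab: "a < b" "b \<le> q" "\<alpha> a = \<alpha> b"
    by (metis nat_neq_iff)
  have m: "\<forall>i j. i \<le> j \<and> j \<le> q \<longrightarrow> \<alpha> i \<le> \<alpha> j" using assms(1) unfolding is_op_def by blast
  have "\<alpha> a \<le> \<alpha> (Suc a)" using m[rule_format, of a "Suc a"] ab by simp
  moreover have "\<alpha> (Suc a) \<le> \<alpha> b" using m[rule_format, of "Suc a" b] ab by simp
  ultimately show ?thesis using ab by (intro exI[of _ a]) auto
qed

lemma nonInj_marked:
  assumes "is_msset X" "w \<in> simp X p" "is_op q p \<alpha>" "\<not> inj_on \<alpha> {0..q}"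
  shows "act X p q w \<alpha> \<in> mark X q"
proof -
  obtain j where j: "j < q" "\<alpha> j = \<alpha> (Suc j)" using adj_eq[OF assms(3,4)] by blast
  define \<beta> where "\<beta> = (\<lambda>i. if i \<le> j then \<alpha> i else \<alpha> (Suc i))"
  define \<sigma> where "\<sigma> = (\<lambda>i::nat. if i \<le> j then i else i - 1)"
  have ss: "is_sset X" using assms(1) unfolding is_msset_def by simp
  have m: "\<And>i i'. i \<le> i' \<Longrightarrow> i' \<le> q \<Longrightarrow> \<alpha> i \<le> \<alpha> i'" and bd: "\<And>i. i\<le>q \<Longrightarrow> \<alpha> i \<le> p"
    using assms(3) unfolding is_op_def by blast+
  have b: "is_op (q - 1) p \<beta>" unfolding is_op_def
  proof (intro conjI allI impI)
    fix i i' assume a: "i \<le> i' \<and> i' \<le> q - 1"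
    show "\<beta> i \<le> \<beta> i'"
    proof (cases "i' \<le> j")
      case True then show ?thesis using a m[of i i'] j unfolding \<beta>_def by auto
    next
      case False
      then have "\<beta> i' = \<alpha> (Suc i')" unfolding \<beta>_def by simp
      moreover have "\<beta> i \<le> \<alpha> (Suc i')"
        using a m[of i "Suc i'"] m[of "Suc i" "Suc i'"] j unfolding \<beta>_def by auto
      ultimately show ?thesis by simp
    qed
  next
    fix i assume "i \<le> q - 1"
    then show "\<beta> i \<le> p" using bd[of i] bd[of "Suc i"] j unfolding \<beta>_def by auto
  qed
  have s: "is_op q (q - 1) \<sigma>" using j unfolding is_op_def \<sigma>_def by auto
  have eq: "\<alpha> i = (\<beta> \<circ> \<sigma>) i" if "i \<le> q" for i
  proof (cases "i \<le> j")
    case True then show ?thesis unfolding \<beta>_def \<sigma>_def by simp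
  next
    case False
    then obtain i0 where i0: "i = Suc i0" "j \<le> i0" by (metis not_le Suc_le_eq lessE)
    then show ?thesis using j unfolding \<beta>_def \<sigma>_def by (cases "i0 = j") auto
  qed
  have "act X p q w \<alpha> = act X p q w (\<beta> \<circ> \<sigma>)" using ss_ext[OF ss assms(2)] eq by blast
  also have "\<dots> = act X (q - 1) q (act X p (q - 1) w \<beta>) \<sigma>"
    using ss_comp[OF ss assms(2) b s] by simp
  finally have e: "act X p q w \<alpha> = act X (q - 1) q (act X p (q - 1) w \<beta>) \<sigma>" .
  have "act X p (q - 1) w \<beta> \<in> simp X (q - 1)" using ss_simp[OF ss assms(2) b] .
  then have "degenerate X q (act X p q w \<alpha>)"
    unfolding degenerate_def using e s j by (intro exI[of _ "q - 1"]) auto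
  moreover have "act X p q w \<alpha> \<in> simp X q" using ss_simp[OF ss assms(2,3)] .
  ultimately show ?thesis using assms(1) unfolding is_msset_def by blast
qed


lemma shift_img: "(\<lambda>t. (a::nat) + t) ` S = {t. a \<le> t \<and> t - a \<in> S}"
proof (rule set_eqI)
  fix t show "t \<in> (\<lambda>t. a + t) ` S \<longleftrightarrow> t \<in> {t. a \<le> t \<and> t - a \<in> S}"
  proof
    assume "t \<in> (\<lambda>t. a + t) ` S"
    then obtain s where "s \<in> S" "t = a + s" by blast
    then show "t \<in> {t. a \<le> t \<and> t - a \<in> S}" by simp
  next
    assume "t \<in> {t. a \<le> t \<and> t - a \<in> S}"
    then have "t = a + (t - a)" "t - a \<in> S" by auto
    then show "t \<in> (\<lambda>t. a + t) ` S" by (metis image_eqI)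
  qed
qed

lemma msset_sset: "is_msset X \<Longrightarrow> is_sset X" unfolding is_msset_def by simp

lemma horn:
  assumes pc: "pre_complicial X" and x: "x \<in> simp X n"
  and ab: "a + 2 \<le> b" "b \<le> n" "a \<le> u" "u \<le> b"
  and hT: "\<And>T. T \<subseteq> {a..b} \<Longrightarrow> 2 \<le> card T \<Longrightarrow> {t. a \<le> t \<and> t \<le> b \<and> u \<le> t+1 \<and> t \<le> u+1} \<subseteq> T \<Longrightarrow> mk X n x T"
  and hF: "\<And>v. a \<le> v \<Longrightarrow> v \<le> b \<Longrightarrow> v \<noteq> u \<Longrightarrow> mk X n x ({a..b}-{v})"
  shows "mk X n x ({a..b}-{u})"
proof -
  define p where "p = b - a"
  define h where "h = u - a"
  have p2: "2 \<le> p" and hp: "h \<le> p" using ab unfolding p_def h_def by auto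
  have ms: "is_msset X" using pc unfolding pre_complicial_def by blast
  have ss: "is_sset X" using ms by (rule msset_sset)
  have rl: "rlp (Delta_nk_d p h) (Delta_nk_dd p h) (\<lambda>m a. a) X"
    using pc p2 hp unfolding pre_complicial_def by blast
  define F where "F = (\<lambda>m (\<beta>::nat\<Rightarrow>nat). act X n m x (\<lambda>j. a + \<beta> j))"
  have opF: "is_op m n (\<lambda>j. a + \<beta> j)" if "is_op m p \<beta>" for m \<beta>
    using that ab unfolding is_op_def p_def by auto
  have smF: "smap (Delta_nk_d p h) X F"
    unfolding smap_def
  proof (intro conjI allI impI)
    fix m \<beta> assume "\<beta> \<in> simp (Delta_nk_d p h) m"
    then have "is_op m p \<beta>" unfolding Delta_nk_d_def dsimp_def by simp
    then show "F m \<beta> \<in> simp X m" unfolding F_def using ss_simp[OF ss x opF] by blast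
  next
    fix q m \<beta> \<gamma> assume b: "\<beta> \<in> simp (Delta_nk_d p h) q" and g: "is_op m q \<gamma>"
    then have bo: "is_op q p \<beta>" unfolding Delta_nk_d_def dsimp_def by simp
    have "act X q m (F q \<beta>) \<gamma> = act X n m x ((\<lambda>j. a + \<beta> j) \<circ> \<gamma>)"
      unfolding F_def using ss_comp[OF ss x opF[OF bo] g] .
    also have "\<dots> = F m (act (Delta_nk_d p h) q m \<beta> \<gamma>)"
      unfolding F_def Delta_nk_d_def dact_def by (rule ss_ext[OF ss x]) simp
    finally show "F m (act (Delta_nk_d p h) q m \<beta> \<gamma>) = act X q m (F q \<beta>) \<gamma>" by simp
  next
    fix m \<beta> assume bm: "\<beta> \<in> mark (Delta_nk_d p h) m"
    then have bd: "\<beta> \<in> dsimp p m" unfolding Delta_nk_d_def mark_nk_def by (auto split: if_splits)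
    then have bo: "is_op m p \<beta>" unfolding dsimp_def by simp
    show "F m \<beta> \<in> mark X m"
    proof (cases "inj_on \<beta> {0..m}")
      case False
      then have "\<not> inj_on (\<lambda>j. a + \<beta> j) {0..m}" unfolding inj_on_def by auto
      then show ?thesis unfolding F_def by (rule nonInj_marked[OF ms x opF[OF bo]])
    next
      case True
      then have inj: "inj_on (\<lambda>j. a + \<beta> j) {0..m}" unfolding inj_on_def by auto
      have img: "(\<lambda>j. a + \<beta> j) ` {0..m} = (\<lambda>t. a + t) ` (\<beta> ` {0..m})" by (simp add: image_image)
      have bsub: "\<beta> ` {0..m} \<subseteq> {0..p}" using bo unfolding is_op_def by auto
      have "mk X n x ((\<lambda>j. a + \<beta> j) ` {0..m})"
      proof (cases "\<beta> \<in> mark_nk p h m")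
        case True
        then have m0: "0 < m" and Kb: "{j. j \<le> p \<and> h \<le> j + 1 \<and> j \<le> h + 1} \<subseteq> \<beta> ` {0..m}"
          using \<open>inj_on \<beta> {0..m}\<close> unfolding mark_nk_def by auto
        show ?thesis
        proof (rule hT)
          show "(\<lambda>j. a + \<beta> j) ` {0..m} \<subseteq> {a..b}" using bsub ab unfolding p_def by auto
          show "2 \<le> card ((\<lambda>j. a + \<beta> j) ` {0..m})" using card_op_image[OF inj] m0 by simp
          show "{t. a \<le> t \<and> t \<le> b \<and> u \<le> t + 1 \<and> t \<le> u + 1} \<subseteq> (\<lambda>j. a + \<beta> j) ` {0..m}"
            unfolding img shift_img using Kb ab unfolding p_def h_def by auto
        qed
      next
        case False
        then have "m = p - 1" and "\<exists>j\<le>p. j \<noteq> h \<and> \<beta> ` {0..m} = {0..p} - {j}"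
          using bm unfolding Delta_nk_d_def by (auto split: if_splits)
        then obtain j where j: "j \<le> p" "j \<noteq> h" "\<beta> ` {0..m} = {0..p} - {j}" by blast
        have "(\<lambda>j. a + \<beta> j) ` {0..m} = {a..b} - {a + j}"
          unfolding img shift_img j(3) using ab unfolding p_def by auto
        then show ?thesis using hF[of "a + j"] j ab unfolding p_def h_def by auto
      qed
      then show ?thesis unfolding F_def using mk_iff[OF ss x opF[OF bo] inj] by simp
    qed
  qed
  obtain G where G: "smap (Delta_nk_dd p h) X G" "\<And>m \<beta>. \<beta> \<in> simp (Delta_nk_d p h) m \<Longrightarrow> G m \<beta> = F m \<beta>"
    using rl smF unfolding rlp_def by blast
  define \<delta> where "\<delta> = (\<lambda>i. if i \<le> p - 1 then (if i < h then i else i + 1) else 0)"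
  have dop: "is_op (p - 1) p \<delta>" unfolding is_op_def \<delta>_def using p2 by auto
  have dds: "\<delta> \<in> dsimp p (p - 1)" unfolding dsimp_def using dop unfolding \<delta>_def by auto
  have dinj: "inj_on \<delta> {0..p-1}" unfolding inj_on_def \<delta>_def by auto
  have "\<delta> \<in> mark (Delta_nk_dd p h) (p - 1)" unfolding Delta_nk_dd_def using dds by simp
  then have "G (p - 1) \<delta> \<in> mark X (p - 1)" using G(1) unfolding smap_def by blast
  moreover have "G (p - 1) \<delta> = F (p - 1) \<delta>" using G(2) dds unfolding Delta_nk_d_def by simp
  ultimately have "act X n (p - 1) x (\<lambda>j. a + \<delta> j) \<in> mark X (p - 1)" unfolding F_def by simp
  moreover have "inj_on (\<lambda>j. a + \<delta> j) {0..p-1}" using dinj unfolding inj_on_def by auto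
  ultimately have "mk X n x ((\<lambda>j. a + \<delta> j) ` {0..p-1})"
    using mk_iff[OF ss x opF[OF dop]] by blast
  moreover have "(\<lambda>j. a + \<delta> j) ` {0..p-1} = {a..b} - {u}"
  proof (rule set_eqI)
    fix t show "t \<in> (\<lambda>j. a + \<delta> j) ` {0..p-1} \<longleftrightarrow> t \<in> {a..b} - {u}"
    proof
      assume "t \<in> (\<lambda>j. a + \<delta> j) ` {0..p-1}"
      then obtain j where "j \<le> p - 1" "t = a + \<delta> j" by auto
      then show "t \<in> {a..b} - {u}" using ab p2 unfolding \<delta>_def p_def h_def by (auto split: if_splits)
    next
      assume t: "t \<in> {a..b} - {u}"
      show "t \<in> (\<lambda>j. a + \<delta> j) ` {0..p-1}"
      proof (cases "t < u")
        case True
        then have "t = a + \<delta> (t - a)" "t - a \<in> {0..p-1}" using t ab unfolding \<delta>_def p_def h_def by auto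
        then show ?thesis by (metis image_eqI)
      next
        case False
        then have "t = a + \<delta> (t - a - 1)" "t - a - 1 \<in> {0..p-1}" using t ab unfolding \<delta>_def p_def h_def by auto
        then show ?thesis by (metis image_eqI)
      qed
    qed
  qed
  ultimately show ?thesis by simp
qed



lemma card2: "finite T \<Longrightarrow> x \<in> T \<Longrightarrow> y \<in> T \<Longrightarrow> x \<noteq> y \<Longrightarrow> 2 \<le> card T"
  using card_mono[of T "{x,y}"] by auto

locale comb =
  fixes n k :: nat and mA mB :: "nat set \<Rightarrow> bool"
  assumes n2: "2 \<le> n" and kn: "k \<le> n"
  and H1: "\<And>T s. T \<subseteq> {0..n} \<Longrightarrow> 2 \<le> card T \<Longrightarrow> {t. t \<le> n \<and> k \<le> t+1 \<and> t \<le> k+1} \<subseteq> T \<Longrightarrow> s \<in> T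
      \<Longrightarrow> mA {t\<in>T. t \<le> s} \<or> mB {t\<in>T. s \<le> t}"
  and H2: "\<And>j s. j \<le> n \<Longrightarrow> j \<noteq> k \<Longrightarrow> s \<le> n \<Longrightarrow> s \<noteq> j
      \<Longrightarrow> mA {t\<in>{0..n}-{j}. t \<le> s} \<or> mB {t\<in>{0..n}-{j}. s \<le> t}"
  and hA: "\<And>a b u. a+2 \<le> b \<Longrightarrow> b \<le> n \<Longrightarrow> a \<le> u \<Longrightarrow> u \<le> b \<Longrightarrow>
      (\<And>T. T \<subseteq> {a..b} \<Longrightarrow> 2 \<le> card T \<Longrightarrow> {t. a \<le> t \<and> t \<le> b \<and> u \<le> t+1 \<and> t \<le> u+1} \<subseteq> T \<Longrightarrow> mA T) \<Longrightarrow>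
      (\<And>v. a \<le> v \<Longrightarrow> v \<le> b \<Longrightarrow> v \<noteq> u \<Longrightarrow> mA ({a..b}-{v})) \<Longrightarrow> mA ({a..b}-{u})"
  and hB: "\<And>a b u. a+2 \<le> b \<Longrightarrow> b \<le> n \<Longrightarrow> a \<le> u \<Longrightarrow> u \<le> b \<Longrightarrow>
      (\<And>T. T \<subseteq> {a..b} \<Longrightarrow> 2 \<le> card T \<Longrightarrow> {t. a \<le> t \<and> t \<le> b \<and> u \<le> t+1 \<and> t \<le> u+1} \<subseteq> T \<Longrightarrow> mB T) \<Longrightarrow>
      (\<And>v. a \<le> v \<Longrightarrow> v \<le> b \<Longrightarrow> v \<noteq> u \<Longrightarrow> mB ({a..b}-{v})) \<Longrightarrow> mB ({a..b}-{u})"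
  and sA: "\<And>s. \<not> mA {s}" and sB: "\<And>s. \<not> mB {s}"
begin

abbreviation "KK \<equiv> {t. t \<le> n \<and> k \<le> t+1 \<and> t \<le> k+1}"

lemma H1min:
  assumes "T \<subseteq> {0..n}" "2 \<le> card T" "KK \<subseteq> T" shows "mB T"
proof -
  have f: "finite T" using assms(1) finite_subset by blast
  have ne: "T \<noteq> {}" using assms(2) by auto
  have m: "Min T \<in> T" using f ne by simp
  have "{t\<in>T. t \<le> Min T} = {Min T}" using m Min_le[OF f] le_antisym by blast
  moreover have "{t\<in>T. Min T \<le> t} = T" using f by auto
  ultimately show ?thesis using H1[OF assms m] sA by metis
qed

lemma H1max:
  assumes "T \<subseteq> {0..n}" "2 \<le> card T" "KK \<subseteq> T" shows "mA T"
proof -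
  have f: "finite T" using assms(1) finite_subset by blast
  have ne: "T \<noteq> {}" using assms(2) by auto
  have m: "Max T \<in> T" using f ne by simp
  have "{t\<in>T. Max T \<le> t} = {Max T}" using m Max_ge[OF f] le_antisym by blast
  moreover have "{t\<in>T. t \<le> Max T} = T" using f by auto
  ultimately show ?thesis using H1[OF assms m] sB by metis
qed

lemma case1:
  assumes "s + 1 < k"
  shows "mA {0..s} \<or> mB ({s..n}-{k})"
proof (cases "mA {0..s}")
  case False
  have "mB ({s..n}-{k})"
  proof (rule hB[of s n k])
    show "s + 2 \<le> n" "n \<le> n" "s \<le> k" "k \<le> n" using assms kn by auto
  next
    fix T assume T: "T \<subseteq> {s..n}" "2 \<le> card T" "{t. s \<le> t \<and> t \<le> n \<and> k \<le> t+1 \<and> t \<le> k+1} \<subseteq> T"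
    have "KK \<subseteq> T" using T(3) assms by auto
    moreover have "T \<subseteq> {0..n}" using T(1) by auto
    ultimately show "mB T" using H1min T(2) by blast
  next
    fix v assume v: "s \<le> v" "v \<le> n" "v \<noteq> k"
    show "mB ({s..n}-{v})"
    proof (cases "v = s")
      case True
      have "2 \<le> card ({s..n}-{v})" using card2[of "{s..n}-{v}" "k-1" k] True assms kn by auto
      moreover have "KK \<subseteq> {s..n}-{v}" using True assms by auto
      moreover have "{s..n}-{v} \<subseteq> {0..n}" by auto
      ultimately show ?thesis using H1min by blast
    next
      case False
      have "{t\<in>{0..n}-{v}. t \<le> s} = {0..s}" using False v assms kn by auto
      moreover have "{t\<in>{0..n}-{v}. s \<le> t} = {s..n}-{v}" by auto
      ultimately show ?thesis using H2[of v s] v False \<open>\<not> mA {0..s}\<close> assms kn by auto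
    qed
  qed
  then show ?thesis by simp
qed simp


lemma KK3: "t \<in> KK \<Longrightarrow> t = k - 1 \<or> t = k \<or> t = k + 1" unfolding mem_Collect_eq by arith

lemma C1:
  assumes "1 \<le> k" shows "mA {0..k-1} \<or> mB {k..n}"
proof (cases "k = 1")
  case True
  have "{t\<in>{0..n}-{0}. t \<le> 1} = {1}" using n2 by auto
  moreover have "{t\<in>{0..n}-{0}. 1 \<le> t} = {k..n}" using True by auto
  ultimately show ?thesis using H2[of 0 1] True n2 sA by auto
next
  case False
  then have k2: "2 \<le> k" using assms by simp
  show ?thesis
  proof (cases "mB {k..n}")
    case nb: False
    have "mA ({0..k}-{k})"
    proof (rule hA[of 0 k k])
      show "0 + 2 \<le> k" "k \<le> n" "0 \<le> k" "k \<le> k" using k2 kn by auto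
    next
      fix T assume T: "T \<subseteq> {0..k}" "2 \<le> card T" "{t. 0 \<le> t \<and> t \<le> k \<and> k \<le> t+1 \<and> t \<le> k+1} \<subseteq> T"
      define T' where "T' = T \<union> {k+1..n}"
      have "k \<in> {t. 0 \<le> t \<and> t \<le> k \<and> k \<le> t+1 \<and> t \<le> k+1}" "k - 1 \<in> {t. 0 \<le> t \<and> t \<le> k \<and> k \<le> t+1 \<and> t \<le> k+1}" using k2 by auto
      then have kT: "k \<in> T" "k - 1 \<in> T" using T(3) by blast+
      have s1: "T' \<subseteq> {0..n}" using T(1) kn unfolding T'_def by auto
      have c: "2 \<le> card T'" using card_mono[of T' T] T(2) s1 finite_subset[OF s1] unfolding T'_def by auto
      have K: "KK \<subseteq> T'"
      proof
        fix t assume tK: "t \<in> KK"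
        then have "t = k - 1 \<or> t = k \<or> t = k + 1" by (rule KK3)
        then show "t \<in> T'" using kT tK unfolding T'_def by auto
      qed
      have "k \<in> T'" using kT unfolding T'_def by auto
      moreover have "{t\<in>T'. t \<le> k} = T" using T(1) unfolding T'_def by auto
      moreover have "{t\<in>T'. k \<le> t} = {k..n}" using T(1) kT kn unfolding T'_def
        by (auto simp: Suc_le_eq) (metis le_neq_implies_less)
      ultimately show "mA T" using H1[OF s1 c K, of k] nb by auto
    next
      fix v assume v: "0 \<le> v" "v \<le> k" "v \<noteq> k"
      have "{t\<in>{0..n}-{v}. t \<le> k} = {0..k}-{v}" using kn by auto
      moreover have "{t\<in>{0..n}-{v}. k \<le> t} = {k..n}" using v by auto
      ultimately show "mA ({0..k}-{v})" using H2[of v k] v kn nb by auto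
    qed
    moreover have "{0..k}-{k} = {0..k-1}" using k2 by auto
    ultimately show ?thesis by simp
  qed simp
qed

lemma case2:
  assumes "1 \<le> k" shows "mA {0..k-1} \<or> mB ({k-1..n}-{k})"
proof (cases "mA {0..k-1}")
  case na: False
  then have b: "mB {k..n}" using C1 assms by auto
  have kn1: "k < n"
  proof (rule ccontr)
    assume "\<not> k < n" then have "{k..n} = {n}" using kn by auto
    then show False using b sB by simp
  qed
  have "mB ({k-1..n}-{k})"
  proof (rule hB[of "k-1" n k])
    show "k - 1 + 2 \<le> n" "n \<le> n" "k - 1 \<le> k" "k \<le> n" using kn1 assms by auto
  next
    fix T assume T: "T \<subseteq> {k-1..n}" "2 \<le> card T" "{t. k-1 \<le> t \<and> t \<le> n \<and> k \<le> t+1 \<and> t \<le> k+1} \<subseteq> T"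
    define T' where "T' = T \<union> {0..k-1}"
    have "k - 1 \<in> {t. k-1 \<le> t \<and> t \<le> n \<and> k \<le> t+1 \<and> t \<le> k+1}" using assms kn by auto
    then have kT: "k - 1 \<in> T" using T(3) by blast
    have s1: "T' \<subseteq> {0..n}" using T(1) kn unfolding T'_def by auto
    have c: "2 \<le> card T'" using card_mono[of T' T] T(2) s1 finite_subset[OF s1] unfolding T'_def by auto
    have K: "KK \<subseteq> T'" using T(3) unfolding T'_def by auto
    have "k - 1 \<in> T'" using kT unfolding T'_def by auto
    moreover have "{t\<in>T'. t \<le> k - 1} = {0..k-1}" using T(1) kT unfolding T'_def by auto
    moreover have "{t\<in>T'. k - 1 \<le> t} = T" using T(1) kT unfolding T'_def by auto
    ultimately show "mB T" using H1[OF s1 c K, of "k-1"] na by auto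
  next
    fix v assume v: "k - 1 \<le> v" "v \<le> n" "v \<noteq> k"
    show "mB ({k-1..n}-{v})"
    proof (cases "v = k - 1")
      case True
      then have "{k-1..n}-{v} = {k..n}" using assms by auto
      then show ?thesis using b by simp
    next
      case False
      have "{t\<in>{0..n}-{v}. t \<le> k - 1} = {0..k-1}" using False v by auto
      moreover have "{t\<in>{0..n}-{v}. k - 1 \<le> t} = {k-1..n}-{v}" by auto
      ultimately show ?thesis using H2[of v "k-1"] v False na kn by auto
    qed
  qed
  then show ?thesis by simp
qed simp

lemma C1':
  assumes "k + 1 \<le> n" shows "mA {0..k} \<or> mB {k+1..n}"
proof (cases "k + 1 = n")
  case True
  have "{t\<in>{0..n}-{n}. t \<le> n - 1} = {0..k}" using True by auto
  moreover have "{t\<in>{0..n}-{n}. n - 1 \<le> t} = {n-1}" using n2 by auto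
  ultimately show ?thesis using H2[of n "n-1"] True n2 sB by auto
next
  case False
  then have k2: "k + 2 \<le> n" using assms by simp
  show ?thesis
  proof (cases "mA {0..k}")
    case na: False
    have "mB ({k..n}-{k})"
    proof (rule hB[of k n k])
      show "k + 2 \<le> n" "n \<le> n" "k \<le> k" "k \<le> n" using k2 by auto
    next
      fix T assume T: "T \<subseteq> {k..n}" "2 \<le> card T" "{t. k \<le> t \<and> t \<le> n \<and> k \<le> t+1 \<and> t \<le> k+1} \<subseteq> T"
      define T' where "T' = T \<union> {0..k}"
      have "k \<in> {t. k \<le> t \<and> t \<le> n \<and> k \<le> t+1 \<and> t \<le> k+1}" "k + 1 \<in> {t. k \<le> t \<and> t \<le> n \<and> k \<le> t+1 \<and> t \<le> k+1}" using k2 by auto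
      then have kT: "k \<in> T" "k + 1 \<in> T" using T(3) by blast+
      have s1: "T' \<subseteq> {0..n}" using T(1) kn unfolding T'_def by auto
      have c: "2 \<le> card T'" using card_mono[of T' T] T(2) s1 finite_subset[OF s1] unfolding T'_def by auto
      have K: "KK \<subseteq> T'"
      proof
        fix t assume tK: "t \<in> KK"
        then have "t = k - 1 \<or> t = k \<or> t = k + 1" by (rule KK3)
        then show "t \<in> T'" using kT tK unfolding T'_def by auto
      qed
      have "k \<in> T'" using kT unfolding T'_def by auto
      moreover have "{t\<in>T'. t \<le> k} = {0..k}" using T(1) kT unfolding T'_def by auto
      moreover have "{t\<in>T'. k \<le> t} = T" using T(1) kT unfolding T'_def by auto
      ultimately show "mB T" using H1[OF s1 c K, of k] na by auto
    next
      fix v assume v: "k \<le> v" "v \<le> n" "v \<noteq> k"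
      have "{t\<in>{0..n}-{v}. t \<le> k} = {0..k}" using v by auto
      moreover have "{t\<in>{0..n}-{v}. k \<le> t} = {k..n}-{v}" by auto
      ultimately show "mB ({k..n}-{v})" using H2[of v k] v kn na by auto
    qed
    moreover have "{k..n}-{k} = {k+1..n}" by auto
    ultimately show ?thesis by simp
  qed simp
qed

lemma case3:
  assumes "k + 1 \<le> n" shows "mA ({0..k+1}-{k}) \<or> mB {k+1..n}"
proof (cases "mB {k+1..n}")
  case nb: False
  then have a: "mA {0..k}" using C1' assms by auto
  have k1: "1 \<le> k"
  proof (rule ccontr)
    assume "\<not> 1 \<le> k" then have "{0..k} = {0}" by auto
    then show False using a sA by simp
  qed
  have "mA ({0..k+1}-{k})"
  proof (rule hA[of 0 "k+1" k])
    show "0 + 2 \<le> k + 1" "k + 1 \<le> n" "0 \<le> k" "k \<le> k + 1" using k1 assms by auto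
  next
    fix T assume T: "T \<subseteq> {0..k+1}" "2 \<le> card T" "{t. 0 \<le> t \<and> t \<le> k+1 \<and> k \<le> t+1 \<and> t \<le> k+1} \<subseteq> T"
    define T' where "T' = T \<union> {k+1..n}"
    have "k + 1 \<in> {t. 0 \<le> t \<and> t \<le> k+1 \<and> k \<le> t+1 \<and> t \<le> k+1}" by simp
    then have kT: "k + 1 \<in> T" using T(3) by blast
    have s1: "T' \<subseteq> {0..n}" using T(1) assms unfolding T'_def by auto
    have c: "2 \<le> card T'" using card_mono[of T' T] T(2) s1 finite_subset[OF s1] unfolding T'_def by auto
    have K: "KK \<subseteq> T'" using T(3) unfolding T'_def by auto
    have "k + 1 \<in> T'" using kT unfolding T'_def by auto
    moreover have "{t\<in>T'. t \<le> k + 1} = T" using T(1) kT unfolding T'_def by auto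
    moreover have "{t\<in>T'. k + 1 \<le> t} = {k+1..n}" using T(1) kT assms unfolding T'_def by auto
    ultimately show "mA T" using H1[OF s1 c K, of "k+1"] nb by auto
  next
    fix v assume v: "0 \<le> v" "v \<le> k + 1" "v \<noteq> k"
    show "mA ({0..k+1}-{v})"
    proof (cases "v = k + 1")
      case True
      then have "{0..k+1}-{v} = {0..k}" by auto
      then show ?thesis using a by simp
    next
      case False
      have "{t\<in>{0..n}-{v}. t \<le> k + 1} = {0..k+1}-{v}" using assms by auto
      moreover have "{t\<in>{0..n}-{v}. k + 1 \<le> t} = {k+1..n}" using False v by auto
      ultimately show ?thesis using H2[of v "k+1"] v False nb assms by auto
    qed
  qed
  then show ?thesis by simp
qed simp

lemma case4:
  assumes "k + 1 < s" "s \<le> n" shows "mA ({0..s}-{k}) \<or> mB {s..n}"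
proof (cases "mB {s..n}")
  case nb: False
  have "mA ({0..s}-{k})"
  proof (rule hA[of 0 s k])
    show "0 + 2 \<le> s" "s \<le> n" "0 \<le> k" "k \<le> s" using assms by auto
  next
    fix T assume T: "T \<subseteq> {0..s}" "2 \<le> card T" "{t. 0 \<le> t \<and> t \<le> s \<and> k \<le> t+1 \<and> t \<le> k+1} \<subseteq> T"
    have "KK \<subseteq> T" using T(3) assms by auto
    moreover have "T \<subseteq> {0..n}" using T(1) assms by auto
    ultimately show "mA T" using H1max T(2) by blast
  next
    fix v assume v: "0 \<le> v" "v \<le> s" "v \<noteq> k"
    show "mA ({0..s}-{v})"
    proof (cases "v = s")
      case True
      have "2 \<le> card ({0..s}-{v})" using card2[of "{0..s}-{v}" k "k+1"] True assms by auto
      moreover have "KK \<subseteq> {0..s}-{v}" using True assms by auto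
      moreover have "{0..s}-{v} \<subseteq> {0..n}" using assms by auto
      ultimately show ?thesis using H1max by blast
    next
      case False
      have "{t\<in>{0..n}-{v}. t \<le> s} = {0..s}-{v}" using assms by auto
      moreover have "{t\<in>{0..n}-{v}. s \<le> t} = {s..n}" using False v by auto
      ultimately show ?thesis using H2[of v s] v False nb assms by auto
    qed
  qed
  then show ?thesis by simp
qed simp

theorem main:
  assumes "s \<le> n" "s \<noteq> k"
  shows "mA {t\<in>{0..n}-{k}. t \<le> s} \<or> mB {t\<in>{0..n}-{k}. s \<le> t}"
proof -
  consider "s + 1 < k" | "s + 1 = k" | "s = k + 1" | "k + 1 < s" using assms(2) by linarith
  then show ?thesis
  proof cases
    case 1
    then have "{t\<in>{0..n}-{k}. t \<le> s} = {0..s}" "{t\<in>{0..n}-{k}. s \<le> t} = {s..n}-{k}" using kn by auto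
    then show ?thesis using case1[OF 1] by simp
  next
    case 2
    then have "{t\<in>{0..n}-{k}. t \<le> s} = {0..k-1}" "{t\<in>{0..n}-{k}. s \<le> t} = {k-1..n}-{k}" using kn by auto
    then show ?thesis using case2 2 by auto
  next
    case 3
    then have "{t\<in>{0..n}-{k}. t \<le> s} = {0..k+1}-{k}" "{t\<in>{0..n}-{k}. s \<le> t} = {k+1..n}" using assms by auto
    then show ?thesis using case3 3 assms by auto
  next
    case 4
    then have "{t\<in>{0..n}-{k}. t \<le> s} = {0..s}-{k}" "{t\<in>{0..n}-{k}. s \<le> t} = {s..n}" using assms by auto
    then show ?thesis using case4 4 assms by auto
  qed
qed

end


lemma enum_props:
  assumes f: "finite T" and ne: "T \<noteq> {}" and sub: "T \<subseteq> {0..n}"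
  shows "is_op (card T - 1) n (enum T)" "inj_on (enum T) {0..card T - 1}"
    "enum T ` {0..card T - 1} = T" "enum T \<in> dsimp n (card T - 1)"
proof -
  define L where "L = sorted_list_of_set T"
  have len: "length L = card T" unfolding L_def by simp
  have srt: "sorted_wrt (<) L" unfolding L_def by simp
  have setL: "set L = T" unfolding L_def using f by simp
  have cp: "0 < card T" using f ne by (simp add: card_gt_0_iff)
  have en: "\<And>j. j \<le> card T - 1 \<Longrightarrow> enum T j = L ! j" unfolding enum_def L_def using cp by auto
  have lt: "enum T i < enum T j" if ij: "i < j" "j \<le> card T - 1" for i j
  proof -
    have "j < length L" using ij len cp by linarith
    then have "L ! i < L ! j" using sorted_wrt_nth_less[OF srt ij(1)] by simp
    then show ?thesis using en[of i] en[of j] ij by simp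
  qed
  have inT: "enum T j \<in> T" if "j \<le> card T - 1" for j
  proof -
    have "j < length L" using that len cp by linarith
    then have "L ! j \<in> set L" by (rule nth_mem)
    then show ?thesis using en[OF that] setL by simp
  qed
  show op: "is_op (card T - 1) n (enum T)" unfolding is_op_def
  proof (intro conjI allI impI)
    fix i j assume "i \<le> j \<and> j \<le> card T - 1" then show "enum T i \<le> enum T j"
      using lt[of i j] by (cases "i = j") auto
  next
    fix i assume "i \<le> card T - 1" then have "enum T i \<in> T" by (rule inT)
    then show "enum T i \<le> n" using sub by auto
  qed
  show "inj_on (enum T) {0..card T - 1}" unfolding inj_on_def
  proof (intro ballI impI)
    fix a b assume ab: "a \<in> {0..card T - 1}" "b \<in> {0..card T - 1}" "enum T a = enum T b"
    show "a = b"
    proof (rule linorder_cases[of a b])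
      assume "a < b" then show ?thesis using lt[of a b] ab by simp
    next
      assume "b < a" then show ?thesis using lt[of b a] ab by simp
    qed
  qed
  show "enum T ` {0..card T - 1} = T"
  proof
    show "enum T ` {0..card T - 1} \<subseteq> T" using inT by auto
  next
    show "T \<subseteq> enum T ` {0..card T - 1}"
    proof
      fix t assume "t \<in> T"
      then obtain i where "i < length L" "t = L ! i" using setL by (metis in_set_conv_nth)
      then have "i \<in> {0..card T - 1}" "t = enum T i" using len en by auto
      then show "t \<in> enum T ` {0..card T - 1}" by blast
    qed
  qed
  show "enum T \<in> dsimp n (card T - 1)" unfolding dsimp_def using op by (auto simp: enum_def)
qed

lemma img_pre:
  assumes "is_op m n \<alpha>" "inj_on \<alpha> {0..m}" "i \<le> m"
  shows "(\<alpha> \<circ> (\<lambda>j. j)) ` {0..i} = {t\<in>\<alpha> ` {0..m}. t \<le> \<alpha> i}"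
proof
  show "(\<alpha> \<circ> (\<lambda>j. j)) ` {0..i} \<subseteq> {t\<in>\<alpha> ` {0..m}. t \<le> \<alpha> i}"
    using assms unfolding is_op_def by auto
next
  show "{t\<in>\<alpha> ` {0..m}. t \<le> \<alpha> i} \<subseteq> (\<alpha> \<circ> (\<lambda>j. j)) ` {0..i}"
  proof
    fix t assume "t \<in> {t\<in>\<alpha> ` {0..m}. t \<le> \<alpha> i}"
    then obtain j where j: "j \<le> m" "t = \<alpha> j" "\<alpha> j \<le> \<alpha> i" by auto
    have "j \<le> i"
    proof (rule ccontr)
      assume "\<not> j \<le> i" then have "\<alpha> i < \<alpha> j" using op_strict[OF assms(1,2), of i j] j by simp
      then show False using j(3) by simp
    qed
    then show "t \<in> (\<alpha> \<circ> (\<lambda>j. j)) ` {0..i}" using j by auto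
  qed
qed

lemma img_suf:
  assumes "is_op m n \<alpha>" "inj_on \<alpha> {0..m}" "i \<le> m"
  shows "(\<alpha> \<circ> (\<lambda>j. i + j)) ` {0..m - i} = {t\<in>\<alpha> ` {0..m}. \<alpha> i \<le> t}"
proof
  show "(\<alpha> \<circ> (\<lambda>j. i + j)) ` {0..m - i} \<subseteq> {t\<in>\<alpha> ` {0..m}. \<alpha> i \<le> t}"
    using assms unfolding is_op_def by auto
next
  show "{t\<in>\<alpha> ` {0..m}. \<alpha> i \<le> t} \<subseteq> (\<alpha> \<circ> (\<lambda>j. i + j)) ` {0..m - i}"
  proof
    fix t assume "t \<in> {t\<in>\<alpha> ` {0..m}. \<alpha> i \<le> t}"
    then obtain j where j: "j \<le> m" "t = \<alpha> j" "\<alpha> i \<le> \<alpha> j" by auto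
    have "i \<le> j"
    proof (rule ccontr)
      assume "\<not> i \<le> j" then have "\<alpha> j < \<alpha> i" using op_strict[OF assms(1,2), of j i] assms(3) by simp
      then show False using j(3) by simp
    qed
    then have "t = (\<alpha> \<circ> (\<lambda>j. i + j)) (j - i)" "j - i \<in> {0..m - i}" using j by auto
    then show "t \<in> (\<alpha> \<circ> (\<lambda>j. i + j)) ` {0..m - i}" by blast
  qed
qed

lemma cloven_iff:
  assumes ssX: "is_sset X" and ssY: "is_sset Y" and x: "x \<in> simp X n" and y: "y \<in> simp Y n"
    and op: "is_op m n \<alpha>" and inj: "inj_on \<alpha> {0..m}" and i: "i \<le> m"
  shows "cloven X Y m i (act X n m x \<alpha>, act Y n m y \<alpha>) \<longleftrightarrow>
    mk X n x {t\<in>\<alpha> ` {0..m}. t \<le> \<alpha> i} \<or> mk Y n y {t\<in>\<alpha> ` {0..m}. \<alpha> i \<le> t}"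
proof -
  have o1: "is_op i m (\<lambda>j. j)" using i unfolding is_op_def by auto
  have o2: "is_op (m - i) m (\<lambda>j. i + j)" using i unfolding is_op_def by auto
  have o1': "is_op i n (\<alpha> \<circ> (\<lambda>j. j))" using op i unfolding is_op_def by auto
  have o2': "is_op (m - i) n (\<alpha> \<circ> (\<lambda>j. i + j))" using op i unfolding is_op_def by auto
  have i1: "inj_on (\<alpha> \<circ> (\<lambda>j. j)) {0..i}" using inj i unfolding inj_on_def by auto
  have i2: "inj_on (\<alpha> \<circ> (\<lambda>j. i + j)) {0..m - i}" unfolding inj_on_def
  proof (intro ballI impI)
    fix a b assume ab: "a \<in> {0..m - i}" "b \<in> {0..m - i}" "(\<alpha> \<circ> (\<lambda>j. i + j)) a = (\<alpha> \<circ> (\<lambda>j. i + j)) b"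
    have "i + a \<in> {0..m}" "i + b \<in> {0..m}" using ab(1,2) i by auto
    moreover have "\<alpha> (i + a) = \<alpha> (i + b)" using ab(3) by simp
    ultimately have "i + a = i + b" using inj unfolding inj_on_def by blast
    then show "a = b" by simp
  qed
  have "act X m i (act X n m x \<alpha>) (\<lambda>j. j) \<in> mark X i \<longleftrightarrow> mk X n x {t\<in>\<alpha> ` {0..m}. t \<le> \<alpha> i}"
    unfolding ss_comp[OF ssX x op o1] mk_iff[OF ssX x o1' i1] img_pre[OF op inj i] ..
  moreover have "act Y m (m - i) (act Y n m y \<alpha>) (\<lambda>j. i + j) \<in> mark Y (m - i) \<longleftrightarrow> mk Y n y {t\<in>\<alpha> ` {0..m}. \<alpha> i \<le> t}"
    unfolding ss_comp[OF ssY y op o2] mk_iff[OF ssY y o2' i2] img_suf[OF op inj i] ..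
  ultimately show ?thesis unfolding cloven_def by simp
qed



lemma gray_sset:
  assumes X: "is_sset X" and Y: "is_sset Y" shows "is_sset (gray X Y)"
  unfolding is_sset_def
proof (intro conjI allI impI)
  fix n m :: nat and xy \<alpha> assume "xy \<in> simp (gray X Y) n" "is_op m n \<alpha>"
  then show "act (gray X Y) n m xy \<alpha> \<in> simp (gray X Y) m"
    unfolding gray_def using ss_simp[OF X] ss_simp[OF Y] by auto
next
  fix n xy assume "xy \<in> simp (gray X Y) n"
  then show "act (gray X Y) n n xy (\<lambda>i. i) = xy"
    unfolding gray_def using ss_id[OF X] ss_id[OF Y] by (cases xy) auto
next
  fix n m k :: nat and xy \<alpha> \<beta> assume "xy \<in> simp (gray X Y) n" "is_op m n \<alpha>" "is_op k m \<beta>"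
  then show "act (gray X Y) m k (act (gray X Y) n m xy \<alpha>) \<beta> = act (gray X Y) n k xy (\<alpha> \<circ> \<beta>)"
    unfolding gray_def using ss_comp[OF X] ss_comp[OF Y] by auto
next
  fix n m :: nat and xy and \<alpha> \<alpha>' :: "nat \<Rightarrow> nat" assume "xy \<in> simp (gray X Y) n" "\<forall>i\<le>m. \<alpha> i = \<alpha>' i"
  then show "act (gray X Y) n m xy \<alpha> = act (gray X Y) n m xy \<alpha>'"
    unfolding gray_def using ss_ext[OF X, of "fst xy" n m \<alpha> \<alpha>'] ss_ext[OF Y, of "snd xy" n m \<alpha> \<alpha>'] by auto
qed

lemma gray_msset:
  assumes X: "is_msset X" and Y: "is_msset Y" shows "is_msset (gray X Y)"
proof -
  have sX: "is_sset X" and sY: "is_sset Y" using X Y by (auto intro: msset_sset)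
  have m0X: "mark X 0 = {}" and m0Y: "mark Y 0 = {}" using X Y unfolding is_msset_def by auto
  have "\<forall>n x. x \<in> simp (gray X Y) n \<longrightarrow> degenerate (gray X Y) n x \<longrightarrow> x \<in> mark (gray X Y) n"
  proof (intro allI impI)
    fix n xy assume xy: "xy \<in> simp (gray X Y) n" and dg: "degenerate (gray X Y) n xy"
    obtain m z \<sigma> where m: "m < n" and z: "z \<in> simp (gray X Y) m" and \<sigma>: "is_op n m \<sigma>"
      and e: "xy = act (gray X Y) m n z \<sigma>"
      using dg unfolding degenerate_def by blast
    have zx: "fst z \<in> simp X m" and zy: "snd z \<in> simp Y m" using z unfolding gray_def by auto
    have ex: "fst xy = act X m n (fst z) \<sigma>" and ey: "snd xy = act Y m n (snd z) \<sigma>"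
      using e unfolding gray_def by auto
    have ni: "\<not> inj_on \<sigma> {0..n}"
    proof
      assume "inj_on \<sigma> {0..n}"
      then have "card (\<sigma> ` {0..n}) = Suc n" by (rule card_op_image)
      moreover have "\<sigma> ` {0..n} \<subseteq> {0..m}" using \<sigma> unfolding is_op_def by auto
      then have "card (\<sigma> ` {0..n}) \<le> Suc m" using card_mono[of "{0..m}"] by fastforce
      ultimately show False using m by simp
    qed
    obtain j where j: "j < n" "\<sigma> j = \<sigma> (Suc j)" using adj_eq[OF \<sigma> ni] by blast
    have "cloven X Y n i xy" if i: "i \<le> n" for i
    proof (cases "j < i")
      case True
      have o1: "is_op i n (\<lambda>t. t)" using i unfolding is_op_def by auto
      have o2: "is_op i m (\<sigma> \<circ> (\<lambda>t. t))" using \<sigma> i unfolding is_op_def by auto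
      have "\<not> inj_on (\<sigma> \<circ> (\<lambda>t. t)) {0..i}" using j True unfolding inj_on_def
        by (metis Suc_le_eq atLeastAtMost_iff comp_apply less_imp_le_nat n_not_Suc_n zero_le)
      then have "act X m i (fst z) (\<sigma> \<circ> (\<lambda>t. t)) \<in> mark X i" by (rule nonInj_marked[OF X zx o2])
      then show ?thesis unfolding cloven_def ex ss_comp[OF sX zx \<sigma> o1] by simp
    next
      case False
      have o1: "is_op (n - i) n (\<lambda>t. i + t)" using i unfolding is_op_def by auto
      have o2: "is_op (n - i) m (\<sigma> \<circ> (\<lambda>t. i + t))" using \<sigma> i unfolding is_op_def by auto
      have a1: "j - i \<in> {0..n - i}" "Suc (j - i) \<in> {0..n - i}" using j False by auto
      have "(\<sigma> \<circ> (\<lambda>t. i + t)) (j - i) = (\<sigma> \<circ> (\<lambda>t. i + t)) (Suc (j - i))" using j False by simp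
      then have "\<not> inj_on (\<sigma> \<circ> (\<lambda>t. i + t)) {0..n - i}" using a1 unfolding inj_on_def by fastforce
      then have "act Y m (n - i) (snd z) (\<sigma> \<circ> (\<lambda>t. i + t)) \<in> mark Y (n - i)" by (rule nonInj_marked[OF Y zy o2])
      then show ?thesis unfolding cloven_def ey ss_comp[OF sY zy \<sigma> o1] by simp
    qed
    then show "xy \<in> mark (gray X Y) n" using xy unfolding gray_def by auto
  qed
  moreover have "mark (gray X Y) 0 = {}" unfolding gray_def cloven_def using m0X m0Y by auto
  moreover have "\<forall>n. mark (gray X Y) n \<subseteq> simp (gray X Y) n" unfolding gray_def by auto
  ultimately show ?thesis unfolding is_msset_def using gray_sset[OF sX sY] by blast
qed


lemma mark_d: "mark (Delta_nk_d n k) m = mark_nk n k m \<union>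
        (if m = n - 1 then {\<alpha> \<in> dsimp n m. \<exists>j\<le>n. j \<noteq> k \<and> inj_on \<alpha> {0..m} \<and>
                                  \<alpha> ` {0..m} = {0..n} - {j}} else {})"
  unfolding Delta_nk_d_def by simp

lemma card_minus_one: "j \<le> n \<Longrightarrow> card ({0..n::nat} - {j}) = n"
  by (simp add: card_Diff_singleton)

theorem theorem1p24:
  fixes X :: "'a msset" and Y :: "'b msset"
  assumes "pre_complicial X" and "pre_complicial Y"
  shows "pre_complicial (gray X Y)"
proof -
  have msX: "is_msset X" and msY: "is_msset Y" using assms unfolding pre_complicial_def by auto
  have ssX: "is_sset X" and ssY: "is_sset Y" using msX msY by (auto intro: msset_sset)
  have m0X: "mark X 0 = {}" and m0Y: "mark Y 0 = {}" using msX msY unfolding is_msset_def by auto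
  have "rlp (Delta_nk_d n k) (Delta_nk_dd n k) (\<lambda>m a. a) (gray X Y)" if n2: "2 \<le> n" and kn: "k \<le> n" for n k
    unfolding rlp_def
  proof (intro allI impI)
    fix f assume sf: "smap (Delta_nk_d n k) (gray X Y) f"
    have sf1: "\<And>m a. a \<in> dsimp n m \<Longrightarrow> f m a \<in> simp (gray X Y) m"
      using sf unfolding smap_def Delta_nk_d_def by simp
    have sf2: "\<And>p m a \<alpha>. a \<in> dsimp n p \<Longrightarrow> is_op m p \<alpha> \<Longrightarrow> f m (dact p m a \<alpha>) = act (gray X Y) p m (f p a) \<alpha>"
      using sf unfolding smap_def Delta_nk_d_def by simp
    have sf3: "\<And>m a. a \<in> mark (Delta_nk_d n k) m \<Longrightarrow> f m a \<in> mark (gray X Y) m"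
      using sf unfolding smap_def by blast
    define idn where "idn = (\<lambda>j::nat. if j \<le> n then j else 0)"
    have idn: "idn \<in> dsimp n n" unfolding dsimp_def is_op_def idn_def by auto
    define x where "x = fst (f n idn)"
    define y where "y = snd (f n idn)"
    have x: "x \<in> simp X n" and y: "y \<in> simp Y n" using sf1[OF idn] unfolding x_def y_def gray_def by auto
    have fval: "f m \<alpha> = (act X n m x \<alpha>, act Y n m y \<alpha>)" if a: "\<alpha> \<in> dsimp n m" for m \<alpha>
    proof -
      have ao: "is_op m n \<alpha>" using a unfolding dsimp_def by simp
      have "dact n m idn \<alpha> = \<alpha>"
      proof
        fix j show "dact n m idn \<alpha> j = \<alpha> j"
          using a unfolding dact_def idn_def dsimp_def is_op_def by auto
      qed
      then show ?thesis using sf2[OF idn ao] unfolding x_def y_def gray_def by simp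
    qed
    have Hgen: "mk X n x {t\<in>T. t \<le> s} \<or> mk Y n y {t\<in>T. s \<le> t}"
      if T: "T \<subseteq> {0..n}" "T \<noteq> {}" "enum T \<in> mark (Delta_nk_d n k) (card T - 1)" and s: "s \<in> T" for T s
    proof -
      have fT: "finite T" using T(1) finite_subset by blast
      note ep = enum_props[OF fT T(2,1)]
      have "f (card T - 1) (enum T) \<in> mark (gray X Y) (card T - 1)" by (rule sf3[OF T(3)])
      then have mk: "(act X n (card T - 1) x (enum T), act Y n (card T - 1) y (enum T)) \<in> mark (gray X Y) (card T - 1)"
        using fval[OF ep(4)] by simp
      obtain i where i: "i \<le> card T - 1" "s = enum T i" using s ep(3) by (metis atLeastAtMost_iff imageE)
      have "cloven X Y (card T - 1) i (act X n (card T - 1) x (enum T), act Y n (card T - 1) y (enum T))"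
        using mk i(1) unfolding gray_def by auto
      then show ?thesis unfolding cloven_iff[OF ssX ssY x y ep(1,2) i(1)] ep(3) i(2) .
    qed
    have C: "comb n k (mk X n x) (mk Y n y)"
    proof (rule comb.intro)
      show "2 \<le> n" "k \<le> n" by fact+
    next
      fix T s assume T: "T \<subseteq> {0..n}" "2 \<le> card T" "{t. t \<le> n \<and> k \<le> t + 1 \<and> t \<le> k + 1} \<subseteq> T" "s \<in> T"
      have fT: "finite T" using T(1) finite_subset by blast
      have ne: "T \<noteq> {}" using T(4) by auto
      note ep = enum_props[OF fT ne T(1)]
      have "enum T \<in> mark_nk n k (card T - 1)" unfolding mark_nk_def using ep(3,4) T(2,3) by auto
      then have "enum T \<in> mark (Delta_nk_d n k) (card T - 1)" unfolding mark_d by simp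
      then show "mk X n x {t \<in> T. t \<le> s} \<or> mk Y n y {t \<in> T. s \<le> t}" using Hgen T(1,4) ne by blast
    next
      fix j s assume js: "j \<le> n" "j \<noteq> k" "s \<le> n" "s \<noteq> j"
      define T where "T = {0..n} - {j}"
      have T1: "T \<subseteq> {0..n}" and fT: "finite T" and ne: "T \<noteq> {}" and sT: "s \<in> T" using js unfolding T_def by auto
      have cT: "card T - 1 = n - 1" unfolding T_def using card_minus_one[OF js(1)] by simp
      note ep = enum_props[OF fT ne T1]
      have "enum T \<in> mark (Delta_nk_d n k) (card T - 1)" unfolding mark_d cT
        using ep(2,3,4) js(1,2) unfolding cT T_def by auto
      then show "mk X n x {t \<in> {0..n} - {j}. t \<le> s} \<or> mk Y n y {t \<in> {0..n} - {j}. s \<le> t}"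
        using Hgen[OF T1 ne _ sT] unfolding T_def by blast
    next
      fix a b u assume "a + 2 \<le> b" "b \<le> n" "a \<le> u" "u \<le> b"
        "\<And>T. T \<subseteq> {a..b} \<Longrightarrow> 2 \<le> card T \<Longrightarrow> {t. a \<le> t \<and> t \<le> b \<and> u \<le> t + 1 \<and> t \<le> u + 1} \<subseteq> T \<Longrightarrow> mk X n x T"
        "\<And>v. a \<le> v \<Longrightarrow> v \<le> b \<Longrightarrow> v \<noteq> u \<Longrightarrow> mk X n x ({a..b} - {v})"
      then show "mk X n x ({a..b} - {u})" using horn[OF assms(1) x] by blast
    next
      fix a b u assume "a + 2 \<le> b" "b \<le> n" "a \<le> u" "u \<le> b"
        "\<And>T. T \<subseteq> {a..b} \<Longrightarrow> 2 \<le> card T \<Longrightarrow> {t. a \<le> t \<and> t \<le> b \<and> u \<le> t + 1 \<and> t \<le> u + 1} \<subseteq> T \<Longrightarrow> mk Y n y T"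
        "\<And>v. a \<le> v \<Longrightarrow> v \<le> b \<Longrightarrow> v \<noteq> u \<Longrightarrow> mk Y n y ({a..b} - {v})"
      then show "mk Y n y ({a..b} - {u})" using horn[OF assms(2) y] by blast
    next
      fix s show "\<not> mk X n x {s}" unfolding mk_def using m0X by simp
    next
      fix s show "\<not> mk Y n y {s}" unfolding mk_def using m0Y by simp
    qed
    have key: "f m a \<in> mark (gray X Y) m" if am: "a \<in> mark (Delta_nk_dd n k) m" for m a
    proof (cases "a \<in> mark (Delta_nk_d n k) m")
      case True then show ?thesis by (rule sf3)
    next
      case False
      then have mn: "m = n - 1" and ad: "a \<in> dsimp n (n - 1)" and nnk: "a \<notin> mark_nk n k (n - 1)"
        and nf: "\<not> (\<exists>j\<le>n. j \<noteq> k \<and> inj_on a {0..n - 1} \<and> a ` {0..n - 1} = {0..n} - {j})"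
        using am unfolding Delta_nk_dd_def mark_d by (auto split: if_splits)
      have ao: "is_op (n - 1) n a" using ad unfolding dsimp_def by simp
      have inj: "inj_on a {0..n - 1}" using nnk ad n2 unfolding mark_nk_def by auto
      define I where "I = a ` {0..n - 1}"
      have Isub: "I \<subseteq> {0..n}"
      proof
        fix t assume "t \<in> I"
        then obtain i where "i \<le> n - 1" "t = a i" unfolding I_def by auto
        then show "t \<in> {0..n}" using ao unfolding is_op_def by auto
      qed
      have cI: "card I = n" using card_op_image[OF inj] n2 unfolding I_def by simp
      have "card ({0..n} - I) = 1" using card_Diff_subset[OF finite_subset[OF Isub] Isub] cI by simp
      then have "\<exists>j. {0..n} - I = {j}" by (simp add: card_1_singleton_iff)
      then obtain j where j: "{0..n} - I = {j}" by blast
      have "j \<in> {0..n} - I" using j by blast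
      then have jn: "j \<le> n" by simp
      have Ieq: "I = {0..n} - {j}" using Isub j by blast
      have jk: "j = k"
      proof (rule ccontr)
        assume "j \<noteq> k"
        then have "\<exists>j\<le>n. j \<noteq> k \<and> inj_on a {0..n - 1} \<and> a ` {0..n - 1} = {0..n} - {j}"
          using jn inj Ieq unfolding I_def by (intro exI[of _ j]) simp
        then show False using nf by blast
      qed
      have "(act X n (n - 1) x a, act Y n (n - 1) y a) \<in> mark (gray X Y) (n - 1)"
      proof -
        have "cloven X Y (n - 1) i (act X n (n - 1) x a, act Y n (n - 1) y a)" if i: "i \<le> n - 1" for i
        proof -
          have "a i \<in> I" using i unfolding I_def by auto
          then have "a i \<le> n" "a i \<noteq> k" using Ieq jk by auto
          then have "mk X n x {t\<in>{0..n}-{k}. t \<le> a i} \<or> mk Y n y {t\<in>{0..n}-{k}. a i \<le> t}"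
            by (rule comb.main[OF C])
          then show ?thesis unfolding cloven_iff[OF ssX ssY x y ao inj i] using Ieq jk unfolding I_def by simp
        qed
        moreover have "act X n (n - 1) x a \<in> simp X (n - 1)" "act Y n (n - 1) y a \<in> simp Y (n - 1)"
          using ss_simp[OF ssX x ao] ss_simp[OF ssY y ao] by auto
        ultimately show ?thesis unfolding gray_def by auto
      qed
      then show ?thesis using fval[OF ad] mn by simp
    qed
    show "\<exists>g. smap (Delta_nk_dd n k) (gray X Y) g \<and> (\<forall>m a. a \<in> simp (Delta_nk_d n k) m \<longrightarrow> g m a = f m a)"
    proof (intro exI conjI allI impI)
      show "smap (Delta_nk_dd n k) (gray X Y) f"
        using sf key unfolding smap_def Delta_nk_dd_def Delta_nk_d_def by simp
    qed simp
  qed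
  then show ?thesis unfolding pre_complicial_def using gray_msset[OF msX msY] by blast
qed


end
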